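(* Let $\Gamma$ be a finite connected graph with vertex set $\mathcal{V}$ and Laplacian matrix $L = D - A$ (where $A$ is the adjacency matrix and $D$ the diagonal matrix of vertex degrees). Fix a prime $p$, and for each integer $i \ge 0$ let $e_i$ be the number of invariant factors of $L$ (i.e., diagonal entries of the Smith normal form of $L$ over $\mathbb{Z}$) that are divisible by $p^i$ but not by $p^{i+1}$. Let $\eta$ be an eigenvalue of $L$ with multiplicity $m$, and assume $\eta$ is an integer. Then: (1) if $p^i \mid \eta$, then $m \le 1 + \sum_{j \ge i} e_j$; (2) if $p^i \parallel \eta$ (that is, $p^i \mid \eta$ and $p^{i+1} \nmid \eta$), then $m \le \sum_{0 \le j \le i} e_j$.
   Context: The Smith normal form of an integer matrix $L$ is the unique diagonal matrix $\mathrm{diag}(s_1,\dots,s_v)$ with nonnegative entries, $s_i \mid s_{i+1}$, such that $ULV = \mathrm{diag}(s_1,\dots,s_v)$ for some unimodular integer matrices $U,V$; the $s_i$ are the invariant factors. For a connected graph exactly one invariant factor of $L$ is $0$. *)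

theory Defs
  imports "Jordan_Normal_Form.Char_Poly" "Jordan_Normal_Form.Determinant"
    "HOL-Computational_Algebra.Primes"
begin

definition simple_graph :: "nat \<Rightarrow> (nat \<Rightarrow> nat \<Rightarrow> bool) \<Rightarrow> bool" where
  "simple_graph n E \<longleftrightarrow> (\<forall>i j. E i j \<longrightarrow> i < n \<and> j < n \<and> i \<noteq> j \<and> E j i)"

definition connected_graph :: "nat \<Rightarrow> (nat \<Rightarrow> nat \<Rightarrow> bool) \<Rightarrow> bool" where
  "connected_graph n E \<longleftrightarrow> n \<ge> 1 \<and> (\<forall>i<n. \<forall>j<n. E\<^sup>*\<^sup>* i j)"

definition adjacency_matrix :: "nat \<Rightarrow> (nat \<Rightarrow> nat \<Rightarrow> bool) \<Rightarrow> int mat" where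
  "adjacency_matrix n E = mat n n (\<lambda>(i,j). if E i j then 1 else 0)"

definition degree_matrix :: "nat \<Rightarrow> (nat \<Rightarrow> nat \<Rightarrow> bool) \<Rightarrow> int mat" where
  "degree_matrix n E = mat n n (\<lambda>(i,j). if i = j then int (card {k. k < n \<and> E i k}) else 0)"

definition laplacian :: "nat \<Rightarrow> (nat \<Rightarrow> nat \<Rightarrow> bool) \<Rightarrow> int mat" where
  "laplacian n E = degree_matrix n E - adjacency_matrix n E"

definition unimodular :: "nat \<Rightarrow> int mat \<Rightarrow> bool" where
  "unimodular n U \<longleftrightarrow> U \<in> carrier_mat n n \<and> (det U = 1 \<or> det U = -1)"

definition is_smith_normal_form :: "nat \<Rightarrow> int mat \<Rightarrow> (nat \<Rightarrow> int) \<Rightarrow> bool" where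
  "is_smith_normal_form n L s \<longleftrightarrow>
     (\<exists>U V. unimodular n U \<and> unimodular n V \<and>
        U * L * V = mat n n (\<lambda>(i,j). if i = j then s i else 0)) \<and>
     (\<forall>i<n. s i \<ge> 0) \<and> (\<forall>i. Suc i < n \<longrightarrow> s i dvd s (Suc i))"

definition inv_count :: "nat \<Rightarrow> (nat \<Rightarrow> int) \<Rightarrow> int \<Rightarrow> nat \<Rightarrow> nat" where
  "inv_count n s p i = card {k. k < n \<and> p ^ i dvd s k \<and> \<not> p ^ (Suc i) dvd s k}"

definition eig_mult :: "int mat \<Rightarrow> int \<Rightarrow> nat" where
  "eig_mult L \<eta> = order (real_of_int \<eta>) (char_poly (map_mat real_of_int L))"

end

theory Submission
  imports Defs "Jordan_Normal_Form.Jordan_Normal_Form_Uniqueness" "Jordan_Normal_Form.Jordan_Normal_Form_Existence"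
begin



lemma kernel_dim_le_via_basis:
  fixes A B :: "'a::field mat"
  assumes A: "A \<in> carrier_mat nr n" and B: "B \<in> carrier_mat nr' n"
    and sub: "mat_kernel A \<subseteq> mat_kernel B"
  shows "kernel.dim n A \<le> kernel.dim n B"
proof -
  interpret KA: kernel nr n A by (unfold_locales, rule A)
  interpret KB: kernel nr' n B by (unfold_locales, rule B)
  from kernel_basis_exists[OF A] obtain bas where fin: "finite bas" and bas: "KA.basis bas" by auto
  have cardA: "KA.dim = card bas" using KA.Ker.dim_basis[OF fin bas] .
  have subA: "bas \<subseteq> mat_kernel A" using bas unfolding KA.Ker.basis_def by auto
  have liA: "\<not> KA.lin_dep bas" using bas unfolding KA.Ker.basis_def by auto
  hence liN: "\<not> KA.NC.lin_dep bas" using KA.lindep_same[OF subA] by simp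
  have subB: "bas \<subseteq> mat_kernel B" using subA sub by auto
  have liB: "\<not> KB.lin_dep bas" using KB.lindep_same[OF subB] liN by simp
  from kernel_basis_exists[OF B] obtain basB where finB: "finite basB" and basB: "KB.basis basB" by auto
  have fdB: "KB.Ker.fin_dim" using finB basB unfolding KB.Ker.fin_dim_def KB.Ker.basis_def by auto
  have "card bas \<le> KB.dim" by (rule KB.Ker.li_le_dim(2)[OF fdB subB liB])
  thus ?thesis using cardA by simp
qed

lemma kernel_dim_le_n:
  fixes A :: "'a::field mat"
  assumes A: "A \<in> carrier_mat nr n"
  shows "kernel.dim n A \<le> n"
proof -
  interpret KA: kernel nr n A by (unfold_locales, rule A)
  from kernel_basis_exists[OF A] obtain bas where fin: "finite bas" and bas: "KA.basis bas" by auto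
  have cardA: "KA.dim = card bas" using KA.Ker.dim_basis[OF fin bas] .
  have subA: "bas \<subseteq> mat_kernel A" using bas unfolding KA.Ker.basis_def by auto
  have liA: "\<not> KA.lin_dep bas" using bas unfolding KA.Ker.basis_def by auto
  hence liN: "\<not> KA.NC.lin_dep bas" using KA.lindep_same[OF subA] by simp
  have "bas \<subseteq> carrier_vec n" using subA mat_kernel_carrier[OF A] by auto
  from KA.NC.li_le_dim(2)[OF KA.NC.fin_dim _ liN] this
  have "card bas \<le> KA.NC.dim" by simp
  thus ?thesis using cardA KA.NC.dim_is_n by simp
qed


lemma uminus_r_inv_mat':
  "(A :: 'a :: group_add mat) \<in> carrier_mat nr nc \<Longrightarrow> A + - A = 0\<^sub>m nr nc"
  by (intro eq_matI, auto)

lemma kernel_dim_four_block_A: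
  fixes A B C D :: "'a::field mat"
  assumes A: "A \<in> carrier_mat t t" and B: "B \<in> carrier_mat t u"
    and C: "C \<in> carrier_mat u t" and D: "D \<in> carrier_mat u u" and dA: "det A \<noteq> 0"
  shows "kernel.dim (t+u) (four_block_mat A B C D) \<le> u"
proof -
  from det_non_zero_imp_unit[OF A dA, unfolded Units_def, of "()"] obtain Ai where 
    Ai: "Ai \<in> carrier_mat t t" and AiA: "Ai * A = 1\<^sub>m t" and AAi: "A * Ai = 1\<^sub>m t" 
    by (auto simp: ring_mat_def)
  define X where "X = four_block_mat (1\<^sub>m t) (0\<^sub>m t u) (-(C*Ai)) (1\<^sub>m u)"
  define Xi where "Xi = four_block_mat (1\<^sub>m t) (0\<^sub>m t u) (C*Ai) (1\<^sub>m u)"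
  define Y where "Y = four_block_mat (1\<^sub>m t) (-(Ai*B)) (0\<^sub>m u t) (1\<^sub>m u)"
  define Yi where "Yi = four_block_mat (1\<^sub>m t) (Ai*B) (0\<^sub>m u t) (1\<^sub>m u)"
  define M where "M = four_block_mat A B C D"
  define S where "S = D - C * Ai * B"
  have CAi: "C * Ai \<in> carrier_mat u t" using C Ai by auto
  have AiB: "Ai * B \<in> carrier_mat t u" using B Ai by auto
  have nCAi: "- (C * Ai) \<in> carrier_mat u t" using CAi by auto
  have nAiB: "- (Ai * B) \<in> carrier_mat t u" using AiB by auto
  have S: "S \<in> carrier_mat u u" unfolding S_def using C Ai B D by auto
  note carr = A B C D Ai CAi AiB nCAi nAiB S
  have X: "X \<in> carrier_mat (t+u) (t+u)" unfolding X_def using CAi by auto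
  have Xi: "Xi \<in> carrier_mat (t+u) (t+u)" unfolding Xi_def using CAi by auto
  have Y: "Y \<in> carrier_mat (t+u) (t+u)" unfolding Y_def using AiB by auto
  have Yi: "Yi \<in> carrier_mat (t+u) (t+u)" unfolding Yi_def using AiB by auto
  have M: "M \<in> carrier_mat (t+u) (t+u)" unfolding M_def using A B C D by auto
  have "Xi * X = four_block_mat (1\<^sub>m t * 1\<^sub>m t + 0\<^sub>m t u * - (C * Ai)) (1\<^sub>m t * 0\<^sub>m t u + 0\<^sub>m t u * 1\<^sub>m u)
     (C * Ai * 1\<^sub>m t + 1\<^sub>m u * - (C * Ai)) (C * Ai * 0\<^sub>m t u + 1\<^sub>m u * 1\<^sub>m u)"
    unfolding X_def Xi_def by (rule mult_four_block_mat, (rule one_carrier_mat zero_carrier_mat carr)+)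
  also have "\<dots> = 1\<^sub>m (t+u)"
    apply (subst left_mult_zero_mat[OF nCAi], subst right_mult_one_mat[OF CAi],
      subst left_mult_one_mat[OF nCAi], subst right_mult_zero_mat[OF CAi])
    using CAi by (simp add: uminus_r_inv_mat')
  finally have XiX: "Xi * X = 1\<^sub>m (t+u)" .
  have "Y * Yi = four_block_mat (1\<^sub>m t * 1\<^sub>m t + - (Ai * B) * 0\<^sub>m u t) (1\<^sub>m t * (Ai * B) + - (Ai * B) * 1\<^sub>m u)
     (0\<^sub>m u t * 1\<^sub>m t + 1\<^sub>m u * 0\<^sub>m u t) (0\<^sub>m u t * (Ai * B) + 1\<^sub>m u * 1\<^sub>m u)"
    unfolding Y_def Yi_def by (rule mult_four_block_mat, (rule one_carrier_mat zero_carrier_mat carr)+)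
  also have "\<dots> = 1\<^sub>m (t+u)"
    apply (subst right_mult_zero_mat[OF nAiB], subst left_mult_one_mat[OF AiB],
      subst right_mult_one_mat[OF nAiB], subst left_mult_zero_mat[OF AiB])
    using AiB by (simp add: uminus_r_inv_mat')
  finally have YYi: "Y * Yi = 1\<^sub>m (t+u)" .
  have "X * M = four_block_mat (1\<^sub>m t * A + 0\<^sub>m t u * C) (1\<^sub>m t * B + 0\<^sub>m t u * D)
     (- (C * Ai) * A + 1\<^sub>m u * C) (- (C * Ai) * B + 1\<^sub>m u * D)"
    unfolding X_def M_def by (rule mult_four_block_mat, (rule one_carrier_mat zero_carrier_mat carr)+)
  also have "\<dots> = four_block_mat A B (0\<^sub>m u t) S"
  proof -
    have "- (C * Ai) * A = - (C * Ai * A)" using CAi A by auto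
    also have "C * Ai * A = C" using C Ai A AiA by (simp add: assoc_mult_mat[of C u t Ai t A t])
    finally have 1: "- (C * Ai) * A + 1\<^sub>m u * C = 0\<^sub>m u t" using C by auto
    have 2: "- (C * Ai) * B + 1\<^sub>m u * D = S" unfolding S_def using C Ai B D by auto
    show ?thesis unfolding 1 2 using carr by (simp add: left_mult_zero_mat left_mult_one_mat)
  qed
  finally have XM: "X * M = four_block_mat A B (0\<^sub>m u t) S" .
  have "X * M * Y = four_block_mat (A * 1\<^sub>m t + B * 0\<^sub>m u t) (A * - (Ai * B) + B * 1\<^sub>m u)
      (0\<^sub>m u t * 1\<^sub>m t + S * 0\<^sub>m u t) (0\<^sub>m u t * - (Ai * B) + S * 1\<^sub>m u)"
    unfolding XM Y_def by (rule mult_four_block_mat, (rule one_carrier_mat zero_carrier_mat carr)+)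
  also have "\<dots> = four_block_mat A (0\<^sub>m t u) (0\<^sub>m u t) S"
  proof -
    have "A * - (Ai * B) = - (A * (Ai * B))" using A AiB by auto
    also have "A * (Ai * B) = B" using A Ai B AAi by (simp add: assoc_mult_mat[of A t t Ai t B u, symmetric])
    finally have 1: "A * - (Ai * B) + B * 1\<^sub>m u = 0\<^sub>m t u" using B by auto
    show ?thesis unfolding 1 using carr 
      by (subst left_mult_zero_mat[OF nAiB], simp add: right_mult_zero_mat right_mult_one_mat)
  qed
  finally have XMY: "X * M * Y = four_block_mat A (0\<^sub>m t u) (0\<^sub>m u t) S" .
  have XMc: "X * M \<in> carrier_mat (t+u) (t+u)" using X M by auto
  have "kernel.dim (t+u) M = kernel.dim (t+u) (X * M)"
    using mat_kernel_mult_eq[OF M X Xi XiX] by simp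
  also have "\<dots> = kernel.dim (t+u) (X * M * Y)"
    using mat_kernel_dim_mult_eq_right[OF XMc Y Yi YYi] by simp
  also have "\<dots> = kernel.dim t A + kernel.dim u S"
    unfolding XMY by (rule kernel_four_block_0_mat[OF refl A S])
  also have "kernel.dim t A = 0"
  proof -
    have "mat_kernel A = mat_kernel (1\<^sub>m t)"
      using mat_kernel_mult_eq[OF A Ai A AAi] AiA by simp
    thus ?thesis using kernel_one_mat(1)[of t, where 'a='a] by simp
  qed
  finally show ?thesis unfolding M_def using kernel_dim_le_n[OF S] by simp
qed
lemma kernel_dim_four_block_D:
  fixes A B C D :: "'a::field mat"
  assumes A: "A \<in> carrier_mat t t" and B: "B \<in> carrier_mat t u"
    and C: "C \<in> carrier_mat u t" and D: "D \<in> carrier_mat u u" and dD: "det D \<noteq> 0"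
  shows "kernel.dim (t+u) (four_block_mat A B C D) \<le> t"
proof -
  from det_non_zero_imp_unit[OF D dD, unfolded Units_def, of "()"] obtain Di where 
    Di: "Di \<in> carrier_mat u u" and DiD: "Di * D = 1\<^sub>m u" and DDi: "D * Di = 1\<^sub>m u" 
    by (auto simp: ring_mat_def)
  define X where "X = four_block_mat (1\<^sub>m t) (-(B*Di)) (0\<^sub>m u t) (1\<^sub>m u)"
  define Xi where "Xi = four_block_mat (1\<^sub>m t) (B*Di) (0\<^sub>m u t) (1\<^sub>m u)"
  define Y where "Y = four_block_mat (1\<^sub>m t) (0\<^sub>m t u) (-(Di*C)) (1\<^sub>m u)"
  define Yi where "Yi = four_block_mat (1\<^sub>m t) (0\<^sub>m t u) (Di*C) (1\<^sub>m u)"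
  define M where "M = four_block_mat A B C D"
  define S where "S = A - B * Di * C"
  have BDi: "B * Di \<in> carrier_mat t u" using B Di by auto
  have DiC: "Di * C \<in> carrier_mat u t" using C Di by auto
  have nBDi: "- (B * Di) \<in> carrier_mat t u" using BDi by auto
  have nDiC: "- (Di * C) \<in> carrier_mat u t" using DiC by auto
  have S: "S \<in> carrier_mat t t" unfolding S_def using A B Di C by auto
  note carr = A B C D Di BDi DiC nBDi nDiC S
  have X: "X \<in> carrier_mat (t+u) (t+u)" unfolding X_def using BDi by auto
  have Xi: "Xi \<in> carrier_mat (t+u) (t+u)" unfolding Xi_def using BDi by auto
  have Y: "Y \<in> carrier_mat (t+u) (t+u)" unfolding Y_def using DiC by auto
  have Yi: "Yi \<in> carrier_mat (t+u) (t+u)" unfolding Yi_def using DiC by auto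
  have M: "M \<in> carrier_mat (t+u) (t+u)" unfolding M_def using A B C D by auto
  have "Xi * X = four_block_mat (1\<^sub>m t * 1\<^sub>m t + B * Di * 0\<^sub>m u t) (1\<^sub>m t * - (B * Di) + B * Di * 1\<^sub>m u)
     (0\<^sub>m u t * 1\<^sub>m t + 1\<^sub>m u * 0\<^sub>m u t) (0\<^sub>m u t * - (B * Di) + 1\<^sub>m u * 1\<^sub>m u)"
    unfolding X_def Xi_def by (rule mult_four_block_mat, (rule one_carrier_mat zero_carrier_mat carr)+)
  also have "\<dots> = 1\<^sub>m (t+u)"
    apply (subst right_mult_zero_mat[OF BDi], subst left_mult_one_mat[OF nBDi],
      subst right_mult_one_mat[OF BDi], subst left_mult_zero_mat[OF nBDi])
    using BDi by (simp add: uminus_r_inv_mat' comm_add_mat[OF nBDi BDi])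
  finally have XiX: "Xi * X = 1\<^sub>m (t+u)" .
  have "Y * Yi = four_block_mat (1\<^sub>m t * 1\<^sub>m t + 0\<^sub>m t u * (Di * C)) (1\<^sub>m t * 0\<^sub>m t u + 0\<^sub>m t u * 1\<^sub>m u)
     (- (Di * C) * 1\<^sub>m t + 1\<^sub>m u * (Di * C)) (- (Di * C) * 0\<^sub>m t u + 1\<^sub>m u * 1\<^sub>m u)"
    unfolding Y_def Yi_def by (rule mult_four_block_mat, (rule one_carrier_mat zero_carrier_mat carr)+)
  also have "\<dots> = 1\<^sub>m (t+u)"
    apply (subst left_mult_zero_mat[OF DiC], subst right_mult_one_mat[OF nDiC],
      subst left_mult_one_mat[OF DiC], subst right_mult_zero_mat[OF nDiC])
    using DiC by simp
  finally have YYi: "Y * Yi = 1\<^sub>m (t+u)" .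
  have "X * M = four_block_mat (1\<^sub>m t * A + - (B * Di) * C) (1\<^sub>m t * B + - (B * Di) * D)
     (0\<^sub>m u t * A + 1\<^sub>m u * C) (0\<^sub>m u t * B + 1\<^sub>m u * D)"
    unfolding X_def M_def by (rule mult_four_block_mat, (rule one_carrier_mat zero_carrier_mat carr)+)
  also have "\<dots> = four_block_mat S (0\<^sub>m t u) C D"
  proof -
    have "- (B * Di) * D = - (B * Di * D)" using BDi D by auto
    also have "B * Di * D = B" using B Di D DiD by (simp add: assoc_mult_mat[of B t u Di u D u])
    finally have 1: "1\<^sub>m t * B + - (B * Di) * D = 0\<^sub>m t u" using B by (simp add: uminus_r_inv_mat')
    have 2: "1\<^sub>m t * A + - (B * Di) * C = S" unfolding S_def using A B Di C by auto
    show ?thesis unfolding 1 2 using carr by (simp add: left_mult_zero_mat left_mult_one_mat)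
  qed
  finally have XM: "X * M = four_block_mat S (0\<^sub>m t u) C D" .
  have "X * M * Y = four_block_mat (S * 1\<^sub>m t + 0\<^sub>m t u * - (Di * C)) (S * 0\<^sub>m t u + 0\<^sub>m t u * 1\<^sub>m u)
      (C * 1\<^sub>m t + D * - (Di * C)) (C * 0\<^sub>m t u + D * 1\<^sub>m u)"
    unfolding XM Y_def by (rule mult_four_block_mat, (rule one_carrier_mat zero_carrier_mat carr)+)
  also have "\<dots> = four_block_mat S (0\<^sub>m t u) (0\<^sub>m u t) D"
  proof -
    have "D * - (Di * C) = - (D * (Di * C))" using D DiC by auto
    also have "D * (Di * C) = C" using D Di C DDi by (simp add: assoc_mult_mat[of D u u Di u C t, symmetric])
    finally have 1: "C * 1\<^sub>m t + D * - (Di * C) = 0\<^sub>m u t" using C by (simp add: uminus_r_inv_mat')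
    show ?thesis unfolding 1 using carr 
      by (subst left_mult_zero_mat[OF nDiC], simp add: right_mult_zero_mat right_mult_one_mat)
  qed
  finally have XMY: "X * M * Y = four_block_mat S (0\<^sub>m t u) (0\<^sub>m u t) D" .
  have XMc: "X * M \<in> carrier_mat (t+u) (t+u)" using X M by auto
  have "kernel.dim (t+u) M = kernel.dim (t+u) (X * M)"
    using mat_kernel_mult_eq[OF M X Xi XiX] by simp
  also have "\<dots> = kernel.dim (t+u) (X * M * Y)"
    using mat_kernel_dim_mult_eq_right[OF XMc Y Yi YYi] by simp
  also have "\<dots> = kernel.dim t S + kernel.dim u D"
    unfolding XMY by (rule kernel_four_block_0_mat[OF refl S D])
  also have "kernel.dim u D = 0"
  proof -
    have "mat_kernel D = mat_kernel (1\<^sub>m u)"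
      using mat_kernel_mult_eq[OF D Di D DDi] DiD by simp
    thus ?thesis using kernel_one_mat(1)[of u, where 'a='a] by simp
  qed
  finally show ?thesis unfolding M_def using kernel_dim_le_n[OF S] by simp
qed

lemma kernel_dim_lead:
  fixes C :: "'a::field mat"
  assumes C: "C \<in> carrier_mat n n" and t: "t \<le> n" 
    and d: "det (mat t t (\<lambda>(i,j). C $$ (i,j))) \<noteq> 0"
  shows "kernel.dim n C \<le> n - t"
proof -
  obtain A1 A2 A3 A4 where sb: "split_block C t t = (A1,A2,A3,A4)" by (cases "split_block C t t", auto)
  have dims: "dim_row C = t + (n - t)" "dim_col C = t + (n - t)" using C t by auto
  note spl = split_block[OF sb dims]
  have "A1 = mat t t (\<lambda>(i,j). C $$ (i,j))" using sb unfolding split_block_def Let_def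
    by (auto intro!: eq_matI)
  with d have dA: "det A1 \<noteq> 0" by simp
  from kernel_dim_four_block_A[OF spl(1-4) dA] spl(5) t show ?thesis by simp
qed

lemma kernel_dim_trail:
  fixes C :: "'a::field mat"
  assumes C: "C \<in> carrier_mat n n" and u: "u \<le> n" 
    and d: "det (mat u u (\<lambda>(i,j). C $$ (i + (n - u), j + (n - u)))) \<noteq> 0"
  shows "kernel.dim n C \<le> n - u"
proof -
  obtain A1 A2 A3 A4 where sb: "split_block C (n - u) (n - u) = (A1,A2,A3,A4)" 
    by (cases "split_block C (n - u) (n - u)", auto)
  have dims: "dim_row C = (n - u) + u" "dim_col C = (n - u) + u" using C u by auto
  note spl = split_block[OF sb dims]
  have "A4 = mat u u (\<lambda>(i,j). C $$ (i + (n - u), j + (n - u)))" using sb C u unfolding split_block_def Let_def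
    by (auto intro!: eq_matI)
  with d have dD: "det A4 \<noteq> 0" by simp
  from kernel_dim_four_block_D[OF spl(1-4) dD] spl(5) u show ?thesis by simp
qed


lemma herm_kernel_sq:
  fixes B :: "complex mat"
  assumes B: "B \<in> carrier_mat n n" 
    and sym: "\<And>i j. i<n \<Longrightarrow> j<n \<Longrightarrow> B$$(i,j) = B$$(j,i)"
    and real: "\<And>i j. i<n \<Longrightarrow> j<n \<Longrightarrow> cnj (B$$(i,j)) = B$$(i,j)"
  shows "mat_kernel (B * B) = mat_kernel B"
proof
  show "mat_kernel B \<subseteq> mat_kernel (B*B)" using mat_kernel_mult_subset[OF B B] .
  show "mat_kernel (B*B) \<subseteq> mat_kernel B"
  proof
    fix v assume "v \<in> mat_kernel (B*B)"
    moreover have BB: "B * B \<in> carrier_mat n n" using B by auto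
    ultimately have v: "v \<in> carrier_vec n" and BBv: "(B*B) *\<^sub>v v = 0\<^sub>v n" 
      using mat_kernelD[OF BB] by auto
    define w where "w = B *\<^sub>v v"
    have w: "w \<in> carrier_vec n" unfolding w_def using B v by auto
    have Bw: "B *\<^sub>v w = 0\<^sub>v n" unfolding w_def using BBv assoc_mult_mat_vec[OF B B v] by simp
    have wi: "w $ i = (\<Sum>j<n. B$$(i,j) * v$j)" if "i < n" for i
      unfolding w_def using B v that by (auto simp: scalar_prod_def lessThan_atLeast0)
    have Bwj: "(\<Sum>i<n. B$$(j,i) * w$i) = 0" if "j < n" for j
    proof -
      have "(B *\<^sub>v w) $ j = 0" using Bw that by simp
      thus ?thesis using B w that by (auto simp: scalar_prod_def lessThan_atLeast0)
    qed
    have "(\<Sum>i<n. w$i * cnj (w$i)) = (\<Sum>i<n. (\<Sum>j<n. B$$(i,j) * v$j) * cnj (w$i))"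
      using wi by simp
    also have "\<dots> = (\<Sum>i<n. \<Sum>j<n. v$j * (B$$(i,j) * cnj (w$i)))"
      by (simp add: sum_distrib_right sum_distrib_left mult_ac)
    also have "\<dots> = (\<Sum>j<n. \<Sum>i<n. v$j * (B$$(i,j) * cnj (w$i)))"
      by (rule sum.swap)
    also have "\<dots> = (\<Sum>j<n. v$j * (\<Sum>i<n. B$$(i,j) * cnj (w$i)))"
      by (simp add: sum_distrib_left)
    also have "\<dots> = (\<Sum>j<n. v$j * cnj (\<Sum>i<n. B$$(j,i) * w$i))"
      by (intro sum.cong refl, simp add: sym real)
    also have "\<dots> = 0" using Bwj by simp
    finally have s0: "(\<Sum>i<n. w$i * cnj (w$i)) = 0" .
    have "(\<Sum>i<n. w$i * cnj (w$i)) = complex_of_real (\<Sum>i<n. (cmod (w$i))^2)"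
    proof -
      have "(\<Sum>i<n. w$i * cnj (w$i)) = (\<Sum>i<n. complex_of_real ((cmod (w$i))^2))"
        by (intro sum.cong refl, rule complex_norm_square[symmetric])
      also have "\<dots> = complex_of_real (\<Sum>i<n. (cmod (w$i))^2)" by (rule of_real_sum[symmetric])
      finally show ?thesis .
    qed
    with s0 have "complex_of_real (\<Sum>i<n. (cmod (w$i))^2) = 0" by simp
    hence "(\<Sum>i<n. (cmod (w$i))^2) = 0" by (simp only: of_real_eq_0_iff)
    hence "\<forall>i\<in>{..<n}. (cmod (w$i))^2 = 0" by (subst sum_nonneg_eq_0_iff[symmetric], auto)
    hence "w = 0\<^sub>v n" using w by (intro eq_vecI, auto)
    thus "v \<in> mat_kernel B" using v unfolding w_def by (intro mat_kernelI[OF B], auto)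
  qed
qed

lemma min12_list: "sum_list (map (min (1::nat)) xs) = sum_list (map (min 2) xs) \<Longrightarrow> sum_list xs = sum_list (map (min 1) xs)"
proof (induction xs)
  case (Cons x xs)
  have "sum_list (map (min (1::nat)) xs) \<le> sum_list (map (min 2) xs)"
    by (rule sum_list_mono, auto)
  with Cons.prems have "min 1 x = min 2 x" and e: "sum_list (map (min (1::nat)) xs) = sum_list (map (min 2) xs)" by auto
  hence "x \<le> 1" by auto
  with Cons.IH[OF e] show ?case by auto
qed simp

lemma alg_geom:
  fixes A :: "complex mat"
  assumes A: "A \<in> carrier_mat n n" 
    and sym: "\<And>i j. i<n \<Longrightarrow> j<n \<Longrightarrow> A$$(i,j) = A$$(j,i)"
    and real: "\<And>i j. i<n \<Longrightarrow> j<n \<Longrightarrow> cnj (A$$(i,j)) = A$$(i,j)"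
    and e: "cnj e = e"
  shows "Polynomial.order e (char_poly A) = kernel.dim n (char_matrix A e)"
proof -
  from char_poly_factorized[OF A] obtain as where "char_poly A = (\<Prod>a\<leftarrow>as. [:- a, 1:])" by auto
  from jordan_nf_exists[OF A this] obtain n_as where jnf: "jordan_nf A n_as" by auto
  let ?B = "char_matrix A e"
  have B: "?B \<in> carrier_mat n n" using A by simp
  have Bij: "?B $$ (i,j) = A $$ (i,j) - (if i = j then e else 0)" if "i<n" "j<n" for i j
    using A that unfolding char_matrix_def by auto
  have ker: "mat_kernel (?B * ?B) = mat_kernel ?B"
    by (rule herm_kernel_sq[OF B], auto simp: Bij sym real e)
  let ?xs = "map fst (filter (\<lambda>(n, e'). e' = e) n_as)"
  have "dim_gen_eigenspace A e 1 = kernel_dim ?B" unfolding dim_gen_eigenspace_def using B by simp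
  also have "\<dots> = kernel_dim (?B * ?B)" unfolding kernel_dim_def using ker B by simp
  also have "\<dots> = dim_gen_eigenspace A e 2" unfolding dim_gen_eigenspace_def using B
    by (simp add: numeral_2_eq_2)
  finally have "sum_list (map (min 1) ?xs) = sum_list (map (min 2) ?xs)"
    unfolding dim_gen_eigenspace[OF jnf] .
  from min12_list[OF this] have "sum_list ?xs = sum_list (map (min 1) ?xs)" .
  also have "\<dots> = dim_gen_eigenspace A e 1" unfolding dim_gen_eigenspace[OF jnf] ..
  also have "\<dots> = kernel.dim n ?B" unfolding dim_gen_eigenspace_def kernel_dim_def using B by simp
  finally have "sum_list ?xs = kernel.dim n ?B" .
  moreover have "Polynomial.order e (char_poly A) = sum_list ?xs"
    unfolding jordan_nf_order[OF jnf] by (rule arg_cong[of _ _ sum_list], rule arg_cong[of _ _ "map fst"], 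
      rule filter_cong, auto)
  ultimately show ?thesis by simp
qed


lemma det_mod_cong:
  fixes G H :: "int mat" and p :: int
  assumes G: "G \<in> carrier_mat t t" and H: "H \<in> carrier_mat t t"
    and c: "\<And>a b. a<t \<Longrightarrow> b<t \<Longrightarrow> G$$(a,b) mod p = H$$(a,b) mod p"
  shows "det G mod p = det H mod p"
proof -
  have pr: "(\<Prod>i = 0..<t. G $$ (i, \<sigma> i)) mod p = (\<Prod>i = 0..<t. H $$ (i, \<sigma> i)) mod p"
    if s: "\<sigma> permutes {0..<t}" for \<sigma>
  proof -
    have "(\<Prod>i = 0..<t. G $$ (i, \<sigma> i)) mod p = (\<Prod>i = 0..<t. G $$ (i, \<sigma> i) mod p) mod p"
      by (simp add: mod_prod_eq)
    also have "\<dots> = (\<Prod>i = 0..<t. H $$ (i, \<sigma> i) mod p) mod p"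
      by (rule arg_cong[of _ _ "\<lambda>x. x mod p"], rule prod.cong[OF refl], rule c, insert permutes_in_image[OF s], auto)
    also have "\<dots> = (\<Prod>i = 0..<t. H $$ (i, \<sigma> i)) mod p" by (simp add: mod_prod_eq)
    finally show ?thesis .
  qed
  have "det G mod p = (\<Sum>\<sigma> | \<sigma> permutes {0..<t}. sign \<sigma> * (\<Prod>i = 0..<t. G $$ (i, \<sigma> i))) mod p"
    using G unfolding det_def by simp
  also have "\<dots> = (\<Sum>\<sigma> | \<sigma> permutes {0..<t}. (sign \<sigma> * (\<Prod>i = 0..<t. G $$ (i, \<sigma> i))) mod p) mod p"
    by (simp add: mod_sum_eq)
  also have "\<dots> = (\<Sum>\<sigma> | \<sigma> permutes {0..<t}. (sign \<sigma> * (\<Prod>i = 0..<t. H $$ (i, \<sigma> i))) mod p) mod p"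
  proof (rule arg_cong[of _ _ "\<lambda>x. x mod p"], rule sum.cong[OF refl])
    fix \<sigma> assume "\<sigma> \<in> {\<sigma>. \<sigma> permutes {0..<t}}"
    hence s: "\<sigma> permutes {0..<t}" by simp
    show "sign \<sigma> * (\<Prod>i = 0..<t. G $$ (i, \<sigma> i)) mod p = sign \<sigma> * (\<Prod>i = 0..<t. H $$ (i, \<sigma> i)) mod p"
      by (rule mod_mult_cong[OF refl pr[OF s]])
  qed
  also have "\<dots> = (\<Sum>\<sigma> | \<sigma> permutes {0..<t}. sign \<sigma> * (\<Prod>i = 0..<t. H $$ (i, \<sigma> i))) mod p"
    by (simp add: mod_sum_eq)
  also have "\<dots> = det H mod p" using H unfolding det_def by simp
  finally show ?thesis .
qed

lemma det_ne0_mod: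
  fixes G :: "int mat" and p c :: int
  assumes G: "G \<in> carrier_mat t t" and p: "prime p" and c: "\<not> p dvd c"
    and cong: "\<And>a b. a<t \<Longrightarrow> b<t \<Longrightarrow> p dvd (G$$(a,b) - (if a = b then c else 0))"
  shows "det G \<noteq> 0"
proof
  assume d0: "det G = 0"
  let ?H = "c \<cdot>\<^sub>m 1\<^sub>m t"
  have H: "?H \<in> carrier_mat t t" by simp
  have "det G mod p = det ?H mod p"
  proof (rule det_mod_cong[OF G H])
    fix a b assume ab: "a < t" "b < t"
    have "?H $$ (a,b) = (if a = b then c else 0)" using ab by auto
    with cong[OF ab] show "G $$ (a, b) mod p = ?H $$ (a, b) mod p"
      by (simp add: mod_eq_dvd_iff)
  qed
  hence "p dvd c ^ t" using d0 by (simp add: mod_eq_dvd_iff dvd_def[of p "c^t"] mod_eq_0_iff_dvd)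
  hence "p dvd c" using p prime_dvd_power by blast
  with c show False by simp
qed

lemma det_row_scale:
  fixes B :: "'a::comm_ring_1 mat"
  assumes B: "B \<in> carrier_mat t t"
  shows "det (mat t t (\<lambda>(i,j). f i * B$$(i,j))) = (\<Prod>i = 0..<t. f i) * det B"
proof -
  let ?M = "mat t t (\<lambda>(i,j). f i * B$$(i,j))"
  have "det ?M = (\<Sum>\<sigma> | \<sigma> permutes {0..<t}. signof \<sigma> * (\<Prod>i = 0..<t. ?M $$ (i, \<sigma> i)))"
    unfolding det_def by simp
  also have "\<dots> = (\<Sum>\<sigma> | \<sigma> permutes {0..<t}. signof \<sigma> * (\<Prod>i = 0..<t. f i * B $$ (i, \<sigma> i)))"
  proof (rule sum.cong[OF refl])
    fix \<sigma> assume "\<sigma> \<in> {\<sigma>. \<sigma> permutes {0..<t}}"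
    hence s: "\<sigma> permutes {0..<t}" by simp
    have "(\<Prod>i = 0..<t. ?M $$ (i, \<sigma> i)) = (\<Prod>i = 0..<t. f i * B $$ (i, \<sigma> i))"
      by (rule prod.cong[OF refl], insert permutes_in_image[OF s], auto)
    thus "signof \<sigma> * (\<Prod>i = 0..<t. ?M $$ (i, \<sigma> i)) = signof \<sigma> * (\<Prod>i = 0..<t. f i * B $$ (i, \<sigma> i))" by simp
  qed
  also have "\<dots> = (\<Sum>\<sigma> | \<sigma> permutes {0..<t}. (\<Prod>i = 0..<t. f i) * (signof \<sigma> * (\<Prod>i = 0..<t. B $$ (i, \<sigma> i))))"
    by (simp add: prod.distrib mult_ac)
  also have "\<dots> = (\<Prod>i = 0..<t. f i) * det B" using B unfolding det_def by (simp add: sum_distrib_left)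
  finally show ?thesis .
qed


lemma lead_block_det:
  fixes s :: "nat \<Rightarrow> int" and p \<eta> :: int and w :: "nat \<Rightarrow> nat \<Rightarrow> int"
  assumes p: "prime p"
    and ns: "\<And>k. k < t \<Longrightarrow> \<not> p ^ i dvd s k"
    and dv: "\<And>k. k < t \<Longrightarrow> s k dvd s (t - 1)"
    and pe: "p ^ i dvd \<eta>"
  shows "det (mat t t (\<lambda>(k,l). (if k = l then s k else 0) - \<eta> * w k l)) \<noteq> 0"
proof (cases "t = 0")
  case True thus ?thesis by (simp add: det_def)
next
  case False
  define G0 where "G0 = mat t t (\<lambda>(k,l). (if k = l then s k else 0) - \<eta> * w k l)"
  define d where "d = s (t - 1)"
  have dnz: "d \<noteq> 0" using ns[of "t-1"] False unfolding d_def by auto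
  have snz: "s k \<noteq> 0" if "k < t" for k using ns[OF that] by auto
  define r where "r k = d div s k" for k
  have rs: "r k * s k = d" if "k < t" for k unfolding r_def d_def using dv[OF that] by simp
  have pnu: "\<not> is_unit p" using p not_prime_unit by blast
  define a where "a = multiplicity p d"
  obtain d' where dd: "d = p ^ a * d'" and d': "\<not> p dvd d'"
    using multiplicity_decompose'[OF dnz pnu] unfolding a_def[symmetric] by metis
  have ai: "a < i"
  proof (rule ccontr)
    assume "\<not> a < i"
    hence "p ^ i dvd p ^ a" by (simp add: le_imp_power_dvd)
    also have "p ^ a dvd d" unfolding a_def by (rule multiplicity_dvd)
    finally have "p ^ i dvd d" .
    with ns[of "t-1"] False show False unfolding d_def by auto
  qed
  have "p ^ (a + 1) dvd p ^ i" by (rule le_imp_power_dvd, insert ai, simp)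
  from dvd_trans[OF this pe] obtain \<eta>1 where e1: "\<eta> = p ^ (a+1) * \<eta>1" by (auto simp: dvd_def)
  define G' where "G' = mat t t (\<lambda>(k,l). (if k = l then d' else 0) - p * \<eta>1 * r k * w k l)"
  have G'c: "G' \<in> carrier_mat t t" unfolding G'_def by simp
  have eq: "mat t t (\<lambda>(k,l). r k * G0 $$ (k,l)) = (p ^ a) \<cdot>\<^sub>m G'"
  proof (rule eq_matI)
    fix k l assume k: "k < dim_row ((p ^ a) \<cdot>\<^sub>m G')" and l: "l < dim_col ((p ^ a) \<cdot>\<^sub>m G')"
    hence k: "k < t" and l: "l < t" unfolding G'_def by auto
    have "r k * G0 $$ (k,l) = (if k = l then r k * s k else 0) - \<eta> * r k * w k l"
      using k l by (cases "k = l") (simp_all add: G0_def right_diff_distrib mult_ac)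
    also have "\<dots> = (if k = l then d else 0) - \<eta> * r k * w k l" unfolding rs[OF k] ..
    also have "\<dots> = p ^ a * ((if k = l then d' else 0) - p * \<eta>1 * r k * w k l)"
    proof -
      have 1: "\<eta> * r k * w k l = p ^ a * (p * \<eta>1 * r k * w k l)" unfolding e1 by (simp add: power_add mult_ac)
      have 2: "(if k = l then d else 0) = p ^ a * (if k = l then d' else 0)" using dd by simp
      show ?thesis unfolding 1 2 by (simp add: right_diff_distrib)
    qed
    finally show "mat t t (\<lambda>(k,l). r k * G0 $$ (k,l)) $$ (k, l) = ((p ^ a) \<cdot>\<^sub>m G') $$ (k, l)"
      using k l unfolding G'_def by simp
  qed (auto simp: G'_def)
  have "det G' \<noteq> 0"
  proof (rule det_ne0_mod[OF G'c p d'])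
    fix k l assume "k < t" "l < t"
    thus "p dvd G' $$ (k, l) - (if k = l then d' else 0)" unfolding G'_def by (cases "k = l") simp_all
  qed
  moreover have "p \<noteq> 0" using p by auto
  ultimately have "det ((p ^ a) \<cdot>\<^sub>m G') \<noteq> 0" using G'c by simp
  hence "det (mat t t (\<lambda>(k,l). r k * G0 $$ (k,l))) \<noteq> 0" unfolding eq .
  moreover have "det (mat t t (\<lambda>(k,l). r k * G0 $$ (k,l))) = (\<Prod>k = 0..<t. r k) * det G0"
    by (rule det_row_scale, simp add: G0_def)
  ultimately have "det G0 \<noteq> 0" by simp
  thus ?thesis unfolding G0_def .
qed

lemma trail_block_det:
  fixes s :: "nat \<Rightarrow> int" and p \<eta> :: int and w :: "nat \<Rightarrow> nat \<Rightarrow> int"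
  assumes p: "prime p"
    and ds: "\<And>k. k < u \<Longrightarrow> p ^ (i+1) dvd s k"
    and pe: "p ^ i dvd \<eta>" and npe: "\<not> p ^ (i+1) dvd \<eta>"
  shows "det (mat u u (\<lambda>(k,l). s k * w k l - (if k = l then \<eta> else 0))) \<noteq> 0"
proof -
  obtain \<eta>' where e: "\<eta> = p ^ i * \<eta>'" using pe by (auto simp: dvd_def)
  have ne: "\<not> p dvd \<eta>'"
  proof
    assume "p dvd \<eta>'"
    hence "p ^ i * p dvd p ^ i * \<eta>'" by (rule mult_dvd_mono[OF dvd_refl])
    hence "p ^ (i+1) dvd \<eta>" unfolding e by (simp add: power_add)
    with npe show False by simp
  qed
  hence ne': "\<not> p dvd (- \<eta>')" by simp
  define q where "q k = s k div p ^ (i+1)" for k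
  have sq: "s k = p ^ i * (p * q k)" if "k < u" for k 
  proof -
    have "s k = p ^ (i+1) * q k" unfolding q_def using ds[OF that] by (rule dvd_mult_div_cancel[symmetric])
    thus ?thesis by (metis power_Suc mult.assoc mult.commute Suc_eq_plus1)
  qed
  define G' where "G' = mat u u (\<lambda>(k,l). p * q k * w k l - (if k = l then \<eta>' else 0))"
  have G'c: "G' \<in> carrier_mat u u" unfolding G'_def by simp
  have eq: "mat u u (\<lambda>(k,l). s k * w k l - (if k = l then \<eta> else 0)) = (p ^ i) \<cdot>\<^sub>m G'"
  proof (rule eq_matI)
    fix k l assume k: "k < dim_row ((p ^ i) \<cdot>\<^sub>m G')" and l: "l < dim_col ((p ^ i) \<cdot>\<^sub>m G')"
    hence k: "k < u" and l: "l < u" unfolding G'_def by auto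
    show "mat u u (\<lambda>(k,l). s k * w k l - (if k = l then \<eta> else 0)) $$ (k, l) = ((p ^ i) \<cdot>\<^sub>m G') $$ (k, l)"
    proof -
      have 1: "s k * w k l = p ^ i * (p * q k * w k l)" using sq[OF k] by (simp add: mult.assoc)
      have 2: "p ^ i * (p * q k * w k l - (if k = l then \<eta>' else 0)) = p ^ i * (p * q k * w k l) - (if k = l then p ^ i * \<eta>' else 0)" 
        by (simp add: right_diff_distrib)
      show ?thesis using k l unfolding G'_def e by (simp add: 1 2)
    qed
  qed (auto simp: G'_def)
  have "det G' \<noteq> 0"
  proof (rule det_ne0_mod[OF G'c p ne'])
    fix k l assume "k < u" "l < u"
    thus "p dvd G' $$ (k, l) - (if k = l then - \<eta>' else 0)" unfolding G'_def by (cases "k = l") simp_all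
  qed
  moreover have "p \<noteq> 0" using p by auto
  ultimately have "det ((p ^ i) \<cdot>\<^sub>m G') \<noteq> 0" using G'c by simp
  thus ?thesis unfolding eq .
qed


lemma lap_entry:
  assumes "i < n" "j < n"
  shows "laplacian n E $$ (i,j) = (if i = j then int (card {k. k < n \<and> E i k}) else 0) - (if E i j then 1 else 0)"
  using assms unfolding laplacian_def degree_matrix_def adjacency_matrix_def by simp

lemma lap_sum:
  fixes x :: "nat \<Rightarrow> real"
  assumes sg: "simple_graph n E" and i: "i < n"
  shows "(\<Sum>j<n. real_of_int (laplacian n E $$ (i,j)) * x j) = (\<Sum>j\<in>{k. k < n \<and> E i k}. x i - x j)"
proof -
  let ?N = "{k. k < n \<and> E i k}"
  have fin: "finite ?N" by simp
  have "(\<Sum>j<n. real_of_int (laplacian n E $$ (i,j)) * x j) = 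
     (\<Sum>j<n. (if j = i then real (card ?N) * x j else 0) - (if E i j then x j else 0))"
    by (rule sum.cong[OF refl], auto simp: lap_entry i algebra_simps)
  also have "\<dots> = real (card ?N) * x i - (\<Sum>j<n. if E i j then x j else 0)"
    using i by (simp add: sum_subtractf)
  also have "(\<Sum>j<n. if E i j then x j else 0) = (\<Sum>j\<in>?N. x j)"
    by (simp add: sum.If_cases lessThan_def Collect_conj_eq Int_commute)
  also have "real (card ?N) * x i - (\<Sum>j\<in>?N. x j) = (\<Sum>j\<in>?N. x i - x j)"
    by (simp add: sum_subtractf)
  finally show ?thesis .
qed

lemma harmonic_const:
  fixes x :: "nat \<Rightarrow> real"
  assumes sg: "simple_graph n E" and conn: "connected_graph n E"
    and h: "\<And>i. i < n \<Longrightarrow> (\<Sum>j<n. real_of_int (laplacian n E $$ (i,j)) * x j) = 0"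
    and i: "i < n" and j: "j < n"
  shows "x i = x j"
proof -
  from conn have n: "n \<ge> 1" and path: "\<And>a b. a < n \<Longrightarrow> b < n \<Longrightarrow> E\<^sup>*\<^sup>* a b"
    unfolding connected_graph_def by auto
  define M where "M = Max (x ` {..<n})"
  have ne: "{..<n} \<noteq> {}" using n by (auto simp: lessThan_empty_iff)
  have le: "x k \<le> M" if "k < n" for k unfolding M_def using that by (intro Max_ge, auto)
  have "M \<in> x ` {..<n}" unfolding M_def by (rule Max_in, insert ne, auto)
  then obtain i0 where i0: "i0 < n" and xi0: "x i0 = M" by auto
  have stepM: "x z = M" if y: "x y = M" and Eyz: "E y z" for y z
  proof -
    have yn: "y < n" and zn: "z < n" using sg Eyz unfolding simple_graph_def by auto
    let ?N = "{k. k < n \<and> E y k}"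
    have "(\<Sum>j\<in>?N. x y - x j) = 0" using h[OF yn] lap_sum[OF sg yn] by simp
    moreover have "\<forall>j\<in>?N. 0 \<le> x y - x j" using le y by auto
    ultimately have "\<forall>j\<in>?N. x y - x j = 0" by (subst sum_nonneg_eq_0_iff[symmetric], auto)
    thus ?thesis using zn Eyz y by auto
  qed
  have all: "x b = M" if "E\<^sup>*\<^sup>* i0 b" for b
    using that
  proof (induction rule: rtranclp_induct)
    case base thus ?case using xi0 .
  next
    case (step y z) thus ?case using stepM by blast
  qed
  show ?thesis using all[OF path[OF i0 i]] all[OF path[OF i0 j]] by simp
qed

lemma lap_kernel_const:
  assumes sg: "simple_graph n E" and conn: "connected_graph n E"
    and v: "v \<in> mat_kernel (map_mat (of_int :: int \<Rightarrow> complex) (laplacian n E))"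
    and i: "i < n" and j: "j < n"
  shows "v $ i = v $ j"
proof -
  let ?L = "laplacian n E"
  let ?Lc = "map_mat (of_int :: int \<Rightarrow> complex) ?L"
  have L: "?L \<in> carrier_mat n n" unfolding laplacian_def degree_matrix_def adjacency_matrix_def by auto
  have Lc: "?Lc \<in> carrier_mat n n" using L by auto
  from mat_kernelD[OF Lc v] have vc: "v \<in> carrier_vec n" and z: "?Lc *\<^sub>v v = 0\<^sub>v n" by auto
  have s: "(\<Sum>j<n. of_int (?L $$ (k,j)) * v $ j) = (0::complex)" if k: "k < n" for k
  proof -
    have "(?Lc *\<^sub>v v) $ k = 0" using z k by simp
    thus ?thesis using k L vc by (auto simp: scalar_prod_def lessThan_atLeast0)
  qed
  have re: "(\<Sum>j<n. real_of_int (?L $$ (k,j)) * Re (v $ j)) = 0" if k: "k < n" for k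
  proof -
    have "Re (\<Sum>j<n. of_int (?L $$ (k,j)) * v $ j) = 0" using s[OF k] by simp
    thus ?thesis by (simp add: Re_sum)
  qed
  have im: "(\<Sum>j<n. real_of_int (?L $$ (k,j)) * Im (v $ j)) = 0" if k: "k < n" for k
  proof -
    have "Im (\<Sum>j<n. of_int (?L $$ (k,j)) * v $ j) = 0" using s[OF k] by simp
    thus ?thesis by (simp add: Im_sum)
  qed
  have "Re (v $ i) = Re (v $ j)" by (rule harmonic_const[OF sg conn re i j])
  moreover have "Im (v $ i) = Im (v $ j)" by (rule harmonic_const[OF sg conn im i j])
  ultimately show ?thesis by (simp add: complex_eq_iff)
qed


definition Dmat :: "nat \<Rightarrow> 'a::field mat" where
  "Dmat n = mat n n (\<lambda>(i,j). if Suc i < n then (if j = i then 1 else if j = n - 1 then -1 else 0) else 0)"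

definition Emat :: "nat \<Rightarrow> nat \<Rightarrow> 'a::field mat" where
  "Emat n r = mat n n (\<lambda>(i,j). if i = j \<and> i < r then 1 else 0)"

lemma kernel_dim_Dmat:
  assumes n: "n \<ge> 1"
  shows "kernel.dim n (Dmat n :: 'a::field mat) = 1"
proof -
  let ?D = "Dmat n :: 'a mat"
  have D: "?D \<in> carrier_mat n n" unfolding Dmat_def by auto
  have "pivot_fun ?D (\<lambda>i. if Suc i < n then i else n) n"
    by (rule pivot_funI, insert n, auto simp: Dmat_def split: if_splits)
  hence ref: "row_echelon_form ?D" unfolding row_echelon_form_def using D by auto
  have rw: "row ?D i \<noteq> 0\<^sub>v n \<longleftrightarrow> Suc i < n" if i: "i < n" for i
  proof
    assume rr: "row ?D i \<noteq> 0\<^sub>v n"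
    show "Suc i < n"
    proof (rule ccontr)
      assume "\<not> (Suc i < n)"
      hence "row ?D i = 0\<^sub>v n" using i by (intro eq_vecI, auto simp: Dmat_def)
      with rr show False by simp
    qed
  next
    assume c: "Suc i < n"
    have "row ?D i $ i = 1" using i c by (auto simp: Dmat_def)
    thus "row ?D i \<noteq> 0\<^sub>v n" using i by auto
  qed
  have "{i. i < n \<and> row ?D i \<noteq> 0\<^sub>v n} = {i. Suc i < n}" using rw by (auto, metis Suc_lessD)
  also have "{i. Suc i < n} = {..<n-1}" by auto
  finally have c: "card {i. i < n \<and> row ?D i \<noteq> 0\<^sub>v n} = n - 1" by simp
  show ?thesis using find_base_vectors(6)[OF ref D] c n by simp
qed

lemma const_in_kernel_Dmat:
  assumes v: "v \<in> carrier_vec n" and c: "\<And>i j. i < n \<Longrightarrow> j < n \<Longrightarrow> v $ i = v $ j"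
  shows "v \<in> mat_kernel (Dmat n :: 'a::field mat)"
proof -
  let ?D = "Dmat n :: 'a mat"
  have D: "?D \<in> carrier_mat n n" unfolding Dmat_def by auto
  have "?D *\<^sub>v v = 0\<^sub>v n"
  proof (rule eq_vecI)
    fix i assume "i < dim_vec (0\<^sub>v n :: 'a vec)"
    hence i: "i < n" by simp
    show "(?D *\<^sub>v v) $ i = 0\<^sub>v n $ i"
    proof (cases "Suc i < n")
      case True
      have "(?D *\<^sub>v v) $ i = (\<Sum>j<n. ?D $$ (i,j) * v $ j)"
        using i D v by (auto simp: scalar_prod_def lessThan_atLeast0)
      also have "\<dots> = (\<Sum>j<n. (if j = i then v $ j else 0) + (if j = n - 1 then - v $ j else 0))"
        by (rule sum.cong[OF refl], insert True, auto simp: Dmat_def)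
      also have "\<dots> = v $ i - v $ (n - 1)" using True by (simp add: sum.distrib)
      also have "\<dots> = 0" using c[of i "n - 1"] True by simp
      finally show ?thesis using i by simp
    next
      case False
      have "(?D *\<^sub>v v) $ i = (\<Sum>j<n. ?D $$ (i,j) * v $ j)"
        using i D v by (auto simp: scalar_prod_def lessThan_atLeast0)
      also have "\<dots> = 0" by (rule sum.neutral, insert False i, auto simp: Dmat_def)
      finally show ?thesis using i by simp
    qed
  qed (insert D, auto)
  thus ?thesis using v D by (intro mat_kernelI, auto)
qed

lemma kernel_dim_Emat:
  assumes r: "r \<le> n"
  shows "kernel.dim n (Emat n r :: 'a::field mat) = n - r"
proof -
  let ?D = "Emat n r :: 'a mat"
  have D: "?D \<in> carrier_mat n n" unfolding Emat_def by auto
  have "pivot_fun ?D (\<lambda>i. if i < r then i else n) n"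
    by (rule pivot_funI, insert r, auto simp: Emat_def split: if_splits)
  hence ref: "row_echelon_form ?D" unfolding row_echelon_form_def using D by auto
  have rw: "row ?D i \<noteq> 0\<^sub>v n \<longleftrightarrow> i < r" if i: "i < n" for i
  proof
    assume rr: "row ?D i \<noteq> 0\<^sub>v n"
    show "i < r"
    proof (rule ccontr)
      assume "\<not> (i < r)"
      hence "row ?D i = 0\<^sub>v n" using i by (intro eq_vecI, auto simp: Emat_def)
      with rr show False by simp
    qed
  next
    assume c: "i < r"
    have "row ?D i $ i = 1" using i c by (auto simp: Emat_def)
    thus "row ?D i \<noteq> 0\<^sub>v n" using i by auto
  qed
  have "{i. i < n \<and> row ?D i \<noteq> 0\<^sub>v n} = {i. i < r}" using rw r by (auto, metis order_less_le_trans)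
  hence c: "card {i. i < n \<and> row ?D i \<noteq> 0\<^sub>v n} = r" by simp
  show ?thesis using find_base_vectors(6)[OF ref D] c by simp
qed


lemma chain_dvd:
  fixes s :: "nat \<Rightarrow> int"
  assumes ch: "\<forall>i. Suc i < n \<longrightarrow> s i dvd s (Suc i)" and jk: "j \<le> k" and k: "k < n"
  shows "s j dvd s k"
  using jk k
proof (induction k)
  case 0 thus ?case by simp
next
  case (Suc k)
  show ?case
  proof (cases "j = Suc k")
    case True thus ?thesis by simp
  next
    case False
    hence "j \<le> k" using Suc.prems by simp
    from Suc.IH[OF this] Suc.prems have "s j dvd s k" by simp
    also have "s k dvd s (Suc k)" using ch Suc.prems by simp
    finally show ?thesis .
  qed
qed

lemma down_closed_eq:
  fixes T :: "nat set"
  assumes sub: "T \<subseteq> {..<n}" and dc: "\<And>k j. k \<in> T \<Longrightarrow> j \<le> k \<Longrightarrow> j \<in> T"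
  shows "T = {..<card T}"
proof -
  have ex: "\<exists>k. k \<notin> T" using sub by (intro exI[of _ n], auto)
  define a where "a = (LEAST k. k \<notin> T)"
  have aT: "a \<notin> T" unfolding a_def using LeastI_ex[OF ex] .
  have 1: "x < a" if "x \<in> T" for x using dc aT that by (metis not_le_imp_less)
  have 2: "x \<in> T" if "x < a" for x using that unfolding a_def using not_less_Least by auto
  have "T = {..<a}" using 1 2 by auto
  thus ?thesis by simp
qed

lemma kernel_dim_inv_mult:
  fixes X M Y :: "'a::field mat"
  assumes X: "X \<in> carrier_mat n n" and M: "M \<in> carrier_mat n n" and Y: "Y \<in> carrier_mat n n"
    and dX: "det X \<noteq> 0" and dY: "det Y \<noteq> 0"
  shows "kernel.dim n (X * M * Y) = kernel.dim n M"
proof -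
  from det_non_zero_imp_unit[OF X dX, unfolded Units_def, of "()"] obtain Xi where 
    Xi: "Xi \<in> carrier_mat n n" and XiX: "Xi * X = 1\<^sub>m n"
    by (auto simp: ring_mat_def)
  from det_non_zero_imp_unit[OF Y dY, unfolded Units_def, of "()"] obtain Yi where 
    Yi: "Yi \<in> carrier_mat n n" and YYi: "Y * Yi = 1\<^sub>m n"
    by (auto simp: ring_mat_def)
  have XM: "X * M \<in> carrier_mat n n" using X M by auto
  have "kernel.dim n (X * M * Y) = kernel.dim n (X * M)"
    using mat_kernel_dim_mult_eq_right[OF XM Y Yi YYi] by simp
  also have "\<dots> = kernel.dim n M" using mat_kernel_mult_eq[OF M X Xi XiX] by simp
  finally show ?thesis .
qed

lemma unimodular_inv:
  assumes U: "unimodular n U"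
  shows "\<exists>Ui. Ui \<in> carrier_mat n n \<and> U * Ui = 1\<^sub>m n \<and> Ui * U = 1\<^sub>m n"
proof -
  from U have Uc: "U \<in> carrier_mat n n" and d: "det U = 1 \<or> det U = -1" unfolding unimodular_def by auto
  have dd: "det U * det U = 1" using d by auto
  define Ui where "Ui = det U \<cdot>\<^sub>m adj_mat U"
  note adj = adj_mat[OF Uc]
  have Ui: "Ui \<in> carrier_mat n n" unfolding Ui_def using adj by auto
  have "U * Ui = det U \<cdot>\<^sub>m (U * adj_mat U)" unfolding Ui_def by (rule mult_smult_distrib[OF Uc adj(1)])
  also have "\<dots> = 1\<^sub>m n" unfolding adj(2) by (rule eq_matI, auto simp: dd mult.assoc[symmetric])
  finally have 1: "U * Ui = 1\<^sub>m n" .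
  have "Ui * U = det U \<cdot>\<^sub>m (adj_mat U * U)" unfolding Ui_def by (rule mult_smult_assoc_mat[OF adj(1) Uc])
  also have "\<dots> = 1\<^sub>m n" unfolding adj(3) by (rule eq_matI, auto simp: dd mult.assoc[symmetric])
  finally have 2: "Ui * U = 1\<^sub>m n" .
  show ?thesis using Ui 1 2 by blast
qed

lemma count1:
  fixes s :: "nat \<Rightarrow> int" and p :: int
  assumes p: "prime p" and z: "card {k. k < n \<and> s k = 0} \<le> 1"
  shows "card {k. k < n \<and> p ^ i dvd s k} \<le> 1 + (\<Sum>j \<in> {j. i \<le> j \<and> inv_count n s p j \<noteq> 0}. inv_count n s p j)"
proof -
  let ?J = "{j. i \<le> j \<and> inv_count n s p j \<noteq> 0}"
  let ?S = "\<lambda>j. {k. k < n \<and> p ^ j dvd s k \<and> \<not> p ^ (Suc j) dvd s k}"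
  have pnu: "\<not> is_unit p" using p not_prime_unit by blast
  have finJ: "finite ?J"
  proof (rule finite_subset)
    show "?J \<subseteq> (\<Union>k\<in>{k. k < n \<and> s k \<noteq> 0}. {..multiplicity p (s k)})"
    proof
      fix j assume "j \<in> ?J"
      hence "card (?S j) \<noteq> 0" unfolding inv_count_def by auto
      hence "?S j \<noteq> {}" by (metis card.empty)
      then obtain k where k: "k < n" "p ^ j dvd s k" "\<not> p ^ (Suc j) dvd s k" by auto
      hence sk: "s k \<noteq> 0" by auto
      have "j \<le> multiplicity p (s k)" using multiplicity_geI[OF sk pnu k(2)] .
      thus "j \<in> (\<Union>k\<in>{k. k < n \<and> s k \<noteq> 0}. {..multiplicity p (s k)})" using k sk by auto
    qed
  qed auto
  have sub: "{k. k < n \<and> p ^ i dvd s k} \<subseteq> {k. k < n \<and> s k = 0} \<union> (\<Union>j\<in>?J. ?S j)"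
  proof
    fix k assume "k \<in> {k. k < n \<and> p ^ i dvd s k}"
    hence k: "k < n" and d: "p ^ i dvd s k" by auto
    show "k \<in> {k. k < n \<and> s k = 0} \<union> (\<Union>j\<in>?J. ?S j)"
    proof (cases "s k = 0")
      case True thus ?thesis using k by auto
    next
      case False
      define j where "j = multiplicity p (s k)"
      have 1: "p ^ j dvd s k" unfolding j_def by (rule multiplicity_dvd)
      have 2: "\<not> p ^ (Suc j) dvd s k" unfolding j_def
        using power_dvd_iff_le_multiplicity[OF False pnu, of "Suc (multiplicity p (s k))"] by auto
      have 3: "i \<le> j" unfolding j_def using multiplicity_geI[OF False pnu d] .
      have kS: "k \<in> ?S j" using k 1 2 by auto
      hence "inv_count n s p j \<noteq> 0" unfolding inv_count_def by (auto simp: card_eq_0_iff)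
      with 3 have "j \<in> ?J" by auto
      with kS show ?thesis by blast
    qed
  qed
  have "card {k. k < n \<and> p ^ i dvd s k} \<le> card ({k. k < n \<and> s k = 0} \<union> (\<Union>j\<in>?J. ?S j))"
    by (rule card_mono[OF _ sub], insert finJ, auto)
  also have "\<dots> \<le> card {k. k < n \<and> s k = 0} + card (\<Union>j\<in>?J. ?S j)" by (rule card_Un_le)
  also have "card (\<Union>j\<in>?J. ?S j) \<le> (\<Sum>j\<in>?J. card (?S j))" by (rule card_UN_le[OF finJ])
  also have "(\<Sum>j\<in>?J. card (?S j)) = (\<Sum>j\<in>?J. inv_count n s p j)" unfolding inv_count_def by simp
  finally show ?thesis using z by simp
qed

lemma count2:
  fixes s :: "nat \<Rightarrow> int" and p :: int
  assumes p: "prime p"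
  shows "card {k. k < n \<and> \<not> p ^ (Suc i) dvd s k} \<le> (\<Sum>j \<le> i. inv_count n s p j)"
proof -
  let ?S = "\<lambda>j. {k. k < n \<and> p ^ j dvd s k \<and> \<not> p ^ (Suc j) dvd s k}"
  have pnu: "\<not> is_unit p" using p not_prime_unit by blast
  have sub: "{k. k < n \<and> \<not> p ^ (Suc i) dvd s k} \<subseteq> (\<Union>j\<in>{..i}. ?S j)"
  proof
    fix k assume "k \<in> {k. k < n \<and> \<not> p ^ (Suc i) dvd s k}"
    hence k: "k < n" and d: "\<not> p ^ (Suc i) dvd s k" by auto
    hence sk: "s k \<noteq> 0" by auto
    define j where "j = multiplicity p (s k)"
    have 1: "p ^ j dvd s k" unfolding j_def by (rule multiplicity_dvd)
    have 2: "\<not> p ^ (Suc j) dvd s k" unfolding j_def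
      using power_dvd_iff_le_multiplicity[OF sk pnu, of "Suc (multiplicity p (s k))"] by auto
    have 3: "j \<le> i"
    proof (rule ccontr)
      assume "\<not> j \<le> i"
      hence "p ^ (Suc i) dvd p ^ j" by (intro le_imp_power_dvd, simp)
      with 1 d show False using dvd_trans by blast
    qed
    show "k \<in> (\<Union>j\<in>{..i}. ?S j)" using k 1 2 3 by auto
  qed
  have "card {k. k < n \<and> \<not> p ^ (Suc i) dvd s k} \<le> card (\<Union>j\<in>{..i}. ?S j)"
    by (rule card_mono[OF _ sub], auto)
  also have "\<dots> \<le> (\<Sum>j\<in>{..i}. card (?S j))" by (rule card_UN_le, simp)
  also have "\<dots> = (\<Sum>j\<le>i. inv_count n s p j)" unfolding inv_count_def by simp
  finally show ?thesis .
qed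





interpretation of_real_poly: map_poly_inj_idom_divide_hom "of_real :: real \<Rightarrow> complex"
  by (unfold_locales, simp add: of_real_divide)

lemma lap_carrier: "laplacian n E \<in> carrier_mat n n"
  unfolding laplacian_def degree_matrix_def adjacency_matrix_def by auto

lemma eig_mult_kernel:
  assumes sg: "simple_graph n E"
  shows "eig_mult (laplacian n E) \<eta> = 
    kernel.dim n (char_matrix (map_mat (of_int :: int \<Rightarrow> complex) (laplacian n E)) (of_int \<eta>))"
proof -
  let ?L = "laplacian n E"
  let ?Lr = "map_mat real_of_int ?L"
  let ?Lc = "map_mat (of_int :: int \<Rightarrow> complex) ?L"
  have L: "?L \<in> carrier_mat n n" by (rule lap_carrier)
  have Lr: "?Lr \<in> carrier_mat n n" using L by simp
  have Lc: "?Lc \<in> carrier_mat n n" using L by simp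
  have eqc: "map_mat of_real ?Lr = ?Lc" by (rule eq_matI, auto)
  have "eig_mult ?L \<eta> = Polynomial.order (real_of_int \<eta>) (char_poly ?Lr)" unfolding eig_mult_def ..
  also have "\<dots> = Polynomial.order (of_real (real_of_int \<eta>)) (map_poly of_real (char_poly ?Lr) :: complex poly)"
    by (rule of_real_poly.order_hom[symmetric])
  also have "map_poly of_real (char_poly ?Lr) = (char_poly ?Lc :: complex poly)"
    unfolding eqc[symmetric] by (rule of_real_hom.char_poly_hom[OF Lr, symmetric])
  also have "(of_real (real_of_int \<eta>) :: complex) = of_int \<eta>" by simp
  also have "Polynomial.order (of_int \<eta>) (char_poly ?Lc) = kernel.dim n (char_matrix ?Lc (of_int \<eta>))"
  proof (rule alg_geom[OF Lc])
    fix i j assume i: "i < n" and j: "j < n"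
    have "?L $$ (i,j) = ?L $$ (j,i)" using sg i j unfolding lap_entry[OF i j] lap_entry[OF j i] simple_graph_def
      by auto
    thus "?Lc $$ (i,j) = ?Lc $$ (j,i)" using i j L by simp
    show "cnj (?Lc $$ (i,j)) = ?Lc $$ (i,j)" using i j L by simp
  qed simp
  finally show ?thesis .
qed

lemma map_mat_mult3:
  fixes X M Y :: "int mat"
  assumes "X \<in> carrier_mat n n" "M \<in> carrier_mat n n" "Y \<in> carrier_mat n n"
  shows "map_mat (of_int :: int \<Rightarrow> complex) (X * M * Y) = map_mat of_int X * map_mat of_int M * map_mat of_int Y"
proof -
  have XM: "X * M \<in> carrier_mat n n" using assms by auto
  have "map_mat (of_int :: int \<Rightarrow> complex) (X * M * Y) = map_mat of_int (X * M) * map_mat of_int Y"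
    by (rule of_int_hom.mat_hom_mult[OF XM assms(3)])
  also have "map_mat (of_int :: int \<Rightarrow> complex) (X * M) = map_mat of_int X * map_mat of_int M"
    by (rule of_int_hom.mat_hom_mult[OF assms(1,2)])
  finally show ?thesis .
qed

theorem lemma2p2:
  fixes n :: nat and E :: "nat \<Rightarrow> nat \<Rightarrow> bool" and p \<eta> :: int and s :: "nat \<Rightarrow> int"
  assumes "simple_graph n E"
    and "connected_graph n E"
    and "prime p"
    and "is_smith_normal_form n (laplacian n E) s"
    and "eigenvalue (map_mat real_of_int (laplacian n E)) (real_of_int \<eta>)"
  shows "(\<forall>i. p ^ i dvd \<eta> \<longrightarrow>
           eig_mult (laplacian n E) \<eta> \<le> 1 + (\<Sum>j \<in> {j. i \<le> j \<and> inv_count n s p j \<noteq> 0}. inv_count n s p j)) \<and>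
         (\<forall>i. p ^ i dvd \<eta> \<and> \<not> p ^ (Suc i) dvd \<eta> \<longrightarrow>
           eig_mult (laplacian n E) \<eta> \<le> (\<Sum>j \<le> i. inv_count n s p j))"
proof -
  note sg = assms(1) and conn = assms(2) and p = assms(3)
  define L where "L = laplacian n E"
  have L: "L \<in> carrier_mat n n" unfolding L_def by (rule lap_carrier)
  define Lc where "Lc = map_mat (of_int :: int \<Rightarrow> complex) L"
  have Lc: "Lc \<in> carrier_mat n n" unfolding Lc_def using L by simp
  from assms(4)[unfolded is_smith_normal_form_def, folded L_def] obtain U V where
    U: "unimodular n U" and V: "unimodular n V" 
    and snf: "U * L * V = mat n n (\<lambda>(i,j). if i = j then s i else 0)"
    and ch: "\<forall>i. Suc i < n \<longrightarrow> s i dvd s (Suc i)" by auto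
  define Sm where "Sm = mat n n (\<lambda>(i,j). if i = j then s i else (0::int))"
  have Uc: "U \<in> carrier_mat n n" and dU: "det U \<noteq> 0" using U unfolding unimodular_def by auto
  have Vc: "V \<in> carrier_mat n n" and dV: "det V \<noteq> 0" using V unfolding unimodular_def by auto
  define M where "M = mat n n (\<lambda>(i,j). L $$ (i,j) - (if i = j then \<eta> else 0))"
  have Mc: "M \<in> carrier_mat n n" unfolding M_def by simp
  define m where "m = eig_mult L \<eta>"
  have m_eq: "m = kernel.dim n (char_matrix Lc (of_int \<eta>))"
    unfolding m_def L_def Lc_def by (rule eig_mult_kernel[OF sg])
  have Mc_eq: "map_mat of_int M = char_matrix Lc (of_int \<eta>)"
    unfolding M_def char_matrix_def using Lc L by (intro eq_matI, auto simp: Lc_def)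
  have KB: "m = kernel.dim n (map_mat (of_int :: int \<Rightarrow> complex) (X * M * Y))"
    if X: "X \<in> carrier_mat n n" and Y: "Y \<in> carrier_mat n n" and dX: "det X \<noteq> 0" and dY: "det Y \<noteq> 0" for X Y
  proof -
    have "map_mat (of_int :: int \<Rightarrow> complex) (X * M * Y) = map_mat of_int X * map_mat of_int M * map_mat of_int Y"
      by (rule map_mat_mult3[OF X Mc Y])
    also have "kernel.dim n \<dots> = kernel.dim n (map_mat of_int M :: complex mat)"
      by (rule kernel_dim_inv_mult, insert X Y Mc dX dY, auto simp: of_int_hom.hom_det)
    finally show ?thesis unfolding m_eq Mc_eq by simp
  qed
  have lead: "m \<le> n - t"
    if X: "X \<in> carrier_mat n n" and Y: "Y \<in> carrier_mat n n" and dX: "det X \<noteq> 0" and dY: "det Y \<noteq> 0"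
      and t: "t \<le> n" and d: "det (mat t t (\<lambda>(a,b). (X * M * Y) $$ (a,b))) \<noteq> 0" for X Y t
  proof -
    let ?N = "X * M * Y"
    have N: "?N \<in> carrier_mat n n" using X Y Mc by auto
    have dN: "dim_row ?N = n" "dim_col ?N = n" using N by auto
    have ix: "map_mat (of_int :: int \<Rightarrow> complex) ?N $$ (a,b) = of_int (?N $$ (a,b))" if "a < n" "b < n" for a b
      by (rule index_map_mat(1), insert that dN, auto)
    have "mat t t (\<lambda>(a,b). (map_mat (of_int :: int \<Rightarrow> complex) ?N) $$ (a,b)) = map_mat of_int (mat t t (\<lambda>(a,b). ?N $$ (a,b)))"
      using t by (intro eq_matI, auto simp: ix)
    hence "det (mat t t (\<lambda>(a,b). (map_mat (of_int :: int \<Rightarrow> complex) ?N) $$ (a,b))) \<noteq> 0"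
      using d by (simp add: of_int_hom.hom_det)
    from kernel_dim_lead[OF _ t this] N have "kernel.dim n (map_mat (of_int :: int \<Rightarrow> complex) ?N) \<le> n - t" by simp
    thus ?thesis using KB[OF X Y dX dY] by simp
  qed
  have trail: "m \<le> n - u"
    if X: "X \<in> carrier_mat n n" and Y: "Y \<in> carrier_mat n n" and dX: "det X \<noteq> 0" and dY: "det Y \<noteq> 0"
      and u: "u \<le> n" and d: "det (mat u u (\<lambda>(a,b). (X * M * Y) $$ (a + (n - u), b + (n - u)))) \<noteq> 0" for X Y u
  proof -
    let ?N = "X * M * Y"
    have N: "?N \<in> carrier_mat n n" using X Y Mc by auto
    have dN: "dim_row ?N = n" "dim_col ?N = n" using N by auto
    have ix: "map_mat (of_int :: int \<Rightarrow> complex) ?N $$ (a,b) = of_int (?N $$ (a,b))" if "a < n" "b < n" for a b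
      by (rule index_map_mat(1), insert that dN, auto)
    have "mat u u (\<lambda>(a,b). (map_mat (of_int :: int \<Rightarrow> complex) ?N) $$ (a + (n - u), b + (n - u))) = 
      map_mat of_int (mat u u (\<lambda>(a,b). ?N $$ (a + (n - u), b + (n - u))))"
      using u by (intro eq_matI, auto simp: ix)
    hence "det (mat u u (\<lambda>(a,b). (map_mat (of_int :: int \<Rightarrow> complex) ?N) $$ (a + (n - u), b + (n - u)))) \<noteq> 0"
      using d by (simp add: of_int_hom.hom_det)
    from kernel_dim_trail[OF _ u this] N have "kernel.dim n (map_mat (of_int :: int \<Rightarrow> complex) ?N) \<le> n - u" by simp
    thus ?thesis using KB[OF X Y dX dY] by simp
  qed
  have n1: "n \<ge> 1" using conn unfolding connected_graph_def by auto
  have Sm: "Sm \<in> carrier_mat n n" unfolding Sm_def by simp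
  have snf': "U * L * V = Sm" unfolding Sm_def using snf .
  have zeros: "card {k. k < n \<and> s k = 0} \<le> 1"
  proof -
    define NZ where "NZ = {k. k < n \<and> s k \<noteq> 0}"
    have NZsub: "NZ \<subseteq> {..<n}" unfolding NZ_def by auto
    have NZdc: "j \<in> NZ" if "k \<in> NZ" "j \<le> k" for k j
    proof -
      have k: "k < n" "s k \<noteq> 0" using that unfolding NZ_def by auto
      have "s j dvd s k" by (rule chain_dvd[OF ch that(2) k(1)])
      thus ?thesis using k that(2) unfolding NZ_def by auto
    qed
    have NZeq: "NZ = {..<card NZ}" by (rule down_closed_eq[OF NZsub NZdc])
    define r where "r = card NZ"
    have rn: "r \<le> n" unfolding r_def using card_mono[OF _ NZsub] by simp
    have Zeq: "{k. k < n \<and> s k = 0} = {..<n} - NZ" unfolding NZ_def by auto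
    have cZ: "card {k. k < n \<and> s k = 0} = n - r" unfolding Zeq r_def
      by (subst card_Diff_subset, insert NZsub, auto intro: finite_subset)
    define Sc where "Sc = map_mat (of_int :: int \<Rightarrow> complex) Sm"
    have Scc: "Sc \<in> carrier_mat n n" unfolding Sc_def using Sm by simp
    have Ec: "(Emat n r :: complex mat) \<in> carrier_mat n n" unfolding Emat_def by simp
    have "mat_kernel (Emat n r :: complex mat) \<subseteq> mat_kernel Sc"
    proof
      fix v :: "complex vec" assume "v \<in> mat_kernel (Emat n r)"
      from mat_kernelD[OF Ec this] have v: "v \<in> carrier_vec n" and Ev: "Emat n r *\<^sub>v v = 0\<^sub>v n" by auto
      have vz: "v $ a = 0" if a: "a < r" for a
      proof -
        have "(Emat n r *\<^sub>v v) $ a = (\<Sum>j<n. (Emat n r :: complex mat) $$ (a,j) * v $ j)"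
          using a rn v Ec by (auto simp: scalar_prod_def lessThan_atLeast0)
        also have "\<dots> = (\<Sum>j<n. if j = a then v $ j else 0)"
          by (rule sum.cong[OF refl], insert a rn, auto simp: Emat_def)
        also have "\<dots> = v $ a" using a rn by simp
        finally show ?thesis using Ev a rn by simp
      qed
      have "Sc *\<^sub>v v = 0\<^sub>v n"
      proof (rule eq_vecI)
        fix a assume "a < dim_vec (0\<^sub>v n :: complex vec)"
        hence a: "a < n" by simp
        have "(Sc *\<^sub>v v) $ a = (\<Sum>j<n. Sc $$ (a,j) * v $ j)"
          using a v Scc by (auto simp: scalar_prod_def lessThan_atLeast0)
        also have "\<dots> = (\<Sum>j<n. if j = a then of_int (s a) * v $ j else 0)"
          by (rule sum.cong[OF refl], insert a, auto simp: Sc_def Sm_def)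
        also have "\<dots> = of_int (s a) * v $ a" using a by simp
        also have "\<dots> = 0"
        proof (cases "a < r")
          case True thus ?thesis using vz by simp
        next
          case False
          hence "a \<notin> NZ" using NZeq unfolding r_def by auto
          thus ?thesis using a unfolding NZ_def by auto
        qed
        finally show "(Sc *\<^sub>v v) $ a = 0\<^sub>v n $ a" using a by simp
      qed (insert Scc, auto)
      thus "v \<in> mat_kernel Sc" using v Scc by (intro mat_kernelI, auto)
    qed
    from kernel_dim_le_via_basis[OF Ec Scc this]
    have "n - r \<le> kernel.dim n Sc" using kernel_dim_Emat[OF rn, where 'a=complex] by simp
    also have "Sc = map_mat of_int U * Lc * map_mat of_int V"
      unfolding Sc_def snf'[symmetric] Lc_def by (rule map_mat_mult3[OF Uc L Vc])
    also have "kernel.dim n \<dots> = kernel.dim n Lc"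
      by (rule kernel_dim_inv_mult, insert Uc Vc Lc dU dV, auto simp: of_int_hom.hom_det)
    also have "\<dots> \<le> kernel.dim n (Dmat n :: complex mat)"
    proof (rule kernel_dim_le_via_basis[OF Lc])
      show "(Dmat n :: complex mat) \<in> carrier_mat n n" unfolding Dmat_def by simp
      show "mat_kernel Lc \<subseteq> mat_kernel (Dmat n)"
      proof
        fix v assume v: "v \<in> mat_kernel Lc"
        show "v \<in> mat_kernel (Dmat n)"
        proof (rule const_in_kernel_Dmat)
          show "v \<in> carrier_vec n" using mat_kernelD[OF Lc v] by auto
          show "v $ a = v $ b" if "a < n" "b < n" for a b
            using lap_kernel_const[OF sg conn v[unfolded Lc_def L_def] that] .
        qed
      qed
    qed
    also have "\<dots> = 1" by (rule kernel_dim_Dmat[OF n1])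
    finally show ?thesis using cZ by simp
  qed
  have XMY: "X * M * Y = X * L * Y - \<eta> \<cdot>\<^sub>m (X * Y)"
    if X: "X \<in> carrier_mat n n" and Y: "Y \<in> carrier_mat n n" for X Y
  proof -
    have Meq: "M = L - \<eta> \<cdot>\<^sub>m 1\<^sub>m n" unfolding M_def using L by (intro eq_matI, auto)
    have "X * M = X * L - X * (\<eta> \<cdot>\<^sub>m 1\<^sub>m n)" unfolding Meq
      by (rule mult_minus_distrib_mat[OF X L], simp)
    also have "X * (\<eta> \<cdot>\<^sub>m 1\<^sub>m n) = \<eta> \<cdot>\<^sub>m X" 
      by (subst mult_smult_distrib[OF X one_carrier_mat], simp add: right_mult_one_mat[OF X])
    finally have "X * M * Y = (X * L - \<eta> \<cdot>\<^sub>m X) * Y" by simp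
    also have "\<dots> = X * L * Y - (\<eta> \<cdot>\<^sub>m X) * Y" 
      by (rule minus_mult_distrib_mat[OF _ _ Y], insert X L, auto)
    also have "(\<eta> \<cdot>\<^sub>m X) * Y = \<eta> \<cdot>\<^sub>m (X * Y)" by (rule mult_smult_assoc_mat[OF X Y])
    finally show ?thesis .
  qed
  show ?thesis
  proof (intro conjI allI impI)
    fix i assume pi: "p ^ i dvd \<eta>"
    define T where "T = {k. k < n \<and> \<not> p ^ i dvd s k}"
    have Tsub: "T \<subseteq> {..<n}" unfolding T_def by auto
    have Tdc: "j \<in> T" if "k \<in> T" "j \<le> k" for k j
    proof -
      have k: "k < n" "\<not> p ^ i dvd s k" using that unfolding T_def by auto
      have "s j dvd s k" by (rule chain_dvd[OF ch that(2) k(1)])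
      thus ?thesis using k that(2) dvd_trans unfolding T_def by auto
    qed
    have Teq: "T = {..<card T}" by (rule down_closed_eq[OF Tsub Tdc])
    define t where "t = card T"
    have tn: "t \<le> n" unfolding t_def using card_mono[OF _ Tsub] by simp
    have ent: "(U * M * V) $$ (a,b) = (if a = b then s a else 0) - \<eta> * (U * V) $$ (a,b)"
      if "a < n" "b < n" for a b
      unfolding XMY[OF Uc Vc] snf' using that Uc Vc Sm by (simp add: Sm_def)
    have "mat t t (\<lambda>(a,b). (U * M * V) $$ (a,b)) = mat t t (\<lambda>(a,b). (if a = b then s a else 0) - \<eta> * (U * V) $$ (a,b))"
      using tn by (intro eq_matI, auto simp: ent)
    also have "det \<dots> \<noteq> 0"
    proof (rule lead_block_det[OF p _ _ pi])
      fix k assume k: "k < t"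
      hence "k \<in> T" using Teq unfolding t_def by auto
      thus "\<not> p ^ i dvd s k" unfolding T_def by auto
      show "s k dvd s (t - 1)" by (rule chain_dvd[OF ch], insert k tn, auto)
    qed
    finally have "m \<le> n - t" by (intro lead[OF Uc Vc dU dV tn])
    also have "n - t = card {k. k < n \<and> p ^ i dvd s k}"
    proof -
      have "{k. k < n \<and> p ^ i dvd s k} = {..<n} - T" unfolding T_def by auto
      thus ?thesis unfolding t_def by (simp add: card_Diff_subset[OF finite_subset[OF Tsub] Tsub])
    qed
    also have "\<dots> \<le> 1 + (\<Sum>j \<in> {j. i \<le> j \<and> inv_count n s p j \<noteq> 0}. inv_count n s p j)"
      by (rule count1[OF p zeros])
    finally show "eig_mult (laplacian n E) \<eta> \<le> 1 + (\<Sum>j \<in> {j. i \<le> j \<and> inv_count n s p j \<noteq> 0}. inv_count n s p j)"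
      unfolding m_def L_def .
  next
    fix i assume "p ^ i dvd \<eta> \<and> \<not> p ^ (Suc i) dvd \<eta>"
    hence pi: "p ^ i dvd \<eta>" and npi: "\<not> p ^ (i + 1) dvd \<eta>" by auto
    obtain Ui where Ui: "Ui \<in> carrier_mat n n" and UUi: "U * Ui = 1\<^sub>m n" using unimodular_inv[OF U] by auto
    obtain Vi where Vi: "Vi \<in> carrier_mat n n" and VVi: "V * Vi = 1\<^sub>m n" using unimodular_inv[OF V] by auto
    have dUi: "det Ui \<noteq> 0"
    proof -
      have "det U * det Ui = 1" using det_mult[OF Uc Ui] UUi by simp
      thus ?thesis by auto
    qed
    define R where "R = Vi * Ui"
    have Rc: "R \<in> carrier_mat n n" unfolding R_def using Vi Ui by auto
    have ULUi: "U * L * Ui = Sm * R"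
    proof -
      have "V * R = Ui" unfolding R_def using Vi Ui Vc VVi
        by (simp add: assoc_mult_mat[of V n n Vi n Ui n, symmetric])
      hence "U * L * Ui = U * L * (V * R)" by simp
      also have "\<dots> = U * L * V * R" 
        by (rule assoc_mult_mat[of "U * L" n n V n R n, symmetric], insert Uc L Vc Rc, auto)
      finally show ?thesis unfolding snf' .
    qed
    have SmR: "(Sm * R) $$ (a,b) = s a * R $$ (a,b)" if a: "a < n" and b: "b < n" for a b
    proof -
      have "(Sm * R) $$ (a,b) = (\<Sum>j<n. Sm $$ (a,j) * R $$ (j,b))"
        using a b Sm Rc by (auto simp: scalar_prod_def lessThan_atLeast0)
      also have "\<dots> = (\<Sum>j<n. if j = a then s a * R $$ (j,b) else 0)"
        by (rule sum.cong[OF refl], insert a, auto simp: Sm_def)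
      also have "\<dots> = s a * R $$ (a,b)" using a by simp
      finally show ?thesis .
    qed
    have ent: "(U * M * Ui) $$ (a,b) = s a * R $$ (a,b) - (if a = b then \<eta> else 0)"
      if "a < n" "b < n" for a b
    proof -
      have SR: "Sm * R \<in> carrier_mat n n" using Sm Rc by auto
      have "(U * M * Ui) $$ (a,b) = (Sm * R) $$ (a,b) - (\<eta> \<cdot>\<^sub>m 1\<^sub>m n) $$ (a,b)"
        unfolding XMY[OF Uc Ui] ULUi UUi using that SR by (subst index_minus_mat, auto)
      also have "(Sm * R) $$ (a,b) = s a * R $$ (a,b)" by (rule SmR[OF that])
      also have "(\<eta> \<cdot>\<^sub>m 1\<^sub>m n) $$ (a,b) = (if a = b then \<eta> else 0)" using that by simp
      finally show ?thesis .
    qed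
    define C where "C = {k. k < n \<and> \<not> p ^ (Suc i) dvd s k}"
    have Csub: "C \<subseteq> {..<n}" unfolding C_def by auto
    have Cdc: "j \<in> C" if "k \<in> C" "j \<le> k" for k j
    proof -
      have k: "k < n" "\<not> p ^ (Suc i) dvd s k" using that unfolding C_def by auto
      have "s j dvd s k" by (rule chain_dvd[OF ch that(2) k(1)])
      thus ?thesis using k that(2) dvd_trans unfolding C_def by auto
    qed
    have Ceq: "C = {..<card C}" by (rule down_closed_eq[OF Csub Cdc])
    define c where "c = card C"
    have cn: "c \<le> n" unfolding c_def using card_mono[OF _ Csub] by simp
    define u where "u = n - c"
    have un: "u \<le> n" and nu: "n - u = c" unfolding u_def using cn by auto
    have "mat u u (\<lambda>(a,b). (U * M * Ui) $$ (a + (n - u), b + (n - u))) = 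
      mat u u (\<lambda>(a,b). s (a + c) * R $$ (a + c, b + c) - (if a = b then \<eta> else 0))"
      unfolding nu using u_def by (intro eq_matI, auto simp: ent)
    also have "det \<dots> \<noteq> 0"
    proof (rule trail_block_det[OF p _ pi npi])
      fix k assume k: "k < u"
      hence "k + c \<notin> C" using Ceq unfolding c_def by auto
      moreover have "k + c < n" using k unfolding u_def by auto
      ultimately show "p ^ (i + 1) dvd s (k + c)" unfolding C_def by auto
    qed
    finally have "m \<le> n - u" by (intro trail[OF Uc Ui dU dUi un])
    also have "n - u = card {k. k < n \<and> \<not> p ^ (Suc i) dvd s k}" unfolding nu c_def C_def ..
    also have "\<dots> \<le> (\<Sum>j \<le> i. inv_count n s p j)" by (rule count2[OF p])
    finally show "eig_mult (laplacian n E) \<eta> \<le> (\<Sum>j \<le> i. inv_count n s p j)"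
      unfolding m_def L_def .
  qed
qed


end
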